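(* Let $n>2$. If $n$ is odd, the Gale dual of $P(D_n)$ is (up to linear change of coordinates) a vector configuration in $\mathbb{R}$ consisting of $n$ copies of each of the vectors $1$ and $-1$. If $n=2m$ is even, the Gale dual of $P(D_n)$ is (up to linear change of coordinates) the vector configuration in $\mathbb{R}^2$ consisting of $m$ copies of each of the four vectors $[\pm1,0]^T$, $[0,\pm1]^T$.
   Context: Each $g\in S_n$ is identified with its $n\times n$ permutation matrix (entry $(i,j)$ is $1$ iff $g(i)=j$); $P(G)=\mathrm{conv}\{g:g\in G\}$. $D_n\le S_n$ is generated by $r=(1\ 2\ \cdots\ n)$ and $f=(1\ n)(2\ n-1)\cdots(\lfloor\frac{n+1}{2}\rfloor\ \lceil\frac{n+1}{2}\rceil)$. For a polytope with vertices $v_1,\dots,v_r$ and dimension $d$, its Gale dual is the configuration of columns $\overline{v}_1,\dots,\overline{v}_r\in\mathbb{R}^{r-d-1}$ of a matrix whose rows form a basis of the space of linear dependences $\{\lambda\in\mathbb{R}^r:\sum\lambda_iv_i=0\}$; it is unique up to linear change of coordinates. *)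

theory Defs
  imports "HOL-Analysis.Analysis"
begin

text \<open>Permutations of {1..n} are represented as functions nat \<Rightarrow> nat fixing every
  point outside {1..n}.\<close>

definition rot :: "nat \<Rightarrow> nat \<Rightarrow> nat" where
  "rot n i = (if 1 \<le> i \<and> i \<le> n then i mod n + 1 else i)"

definition flip :: "nat \<Rightarrow> nat \<Rightarrow> nat" where
  "flip n i = (if 1 \<le> i \<and> i \<le> n then n + 1 - i else i)"

inductive_set dihedral :: "nat \<Rightarrow> (nat \<Rightarrow> nat) set" for n :: nat where
  id_in: "id \<in> dihedral n"
| rot_in: "rot n \<in> dihedral n"
| flip_in: "flip n \<in> dihedral n"
| comp_in: "g \<in> dihedral n \<Longrightarrow> h \<in> dihedral n \<Longrightarrow> g \<circ> h \<in> dihedral n"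
| inv_in: "g \<in> dihedral n \<Longrightarrow> inv g \<in> dihedral n"

definition perm_entry :: "(nat \<Rightarrow> nat) \<Rightarrow> nat \<Rightarrow> nat \<Rightarrow> real" where
  "perm_entry g i j = (if g i = j then 1 else 0)"

text \<open>The space of linear dependences among the vertices (the permutation matrices
  of the elements of D_n) of P(D_n), as real functions on D_n (zero outside D_n).\<close>
definition dependences :: "nat \<Rightarrow> ((nat \<Rightarrow> nat) \<Rightarrow> real) set" where
  "dependences n = {lam. (\<forall>g. g \<notin> dihedral n \<longrightarrow> lam g = 0) \<and>
      (\<forall>i\<in>{1..n}. \<forall>j\<in>{1..n}. (\<Sum>g\<in>dihedral n. lam g * perm_entry g i j) = 0)}"

end

theory Submission
  imports Defs
begin


definition rotk :: "nat \<Rightarrow> int \<Rightarrow> nat \<Rightarrow> nat" where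
  "rotk n k i = (if 1 \<le> i \<and> i \<le> n then nat ((int i - 1 + k) mod int n) + 1 else i)"
definition reflk :: "nat \<Rightarrow> int \<Rightarrow> nat \<Rightarrow> nat" where
  "reflk n k i = (if 1 \<le> i \<and> i \<le> n then nat ((k - int i) mod int n) + 1 else i)"

lemma rotk_int: "n > 0 \<Longrightarrow> 1 \<le> i \<Longrightarrow> i \<le> n \<Longrightarrow> int (rotk n k i) - 1 = (int i - 1 + k) mod int n"
  unfolding rotk_def by simp
lemma reflk_int: "n > 0 \<Longrightarrow> 1 \<le> i \<Longrightarrow> i \<le> n \<Longrightarrow> int (reflk n k i) - 1 = (k - int i) mod int n"
  unfolding reflk_def by simp

lemma rotk_range: "n > 0 \<Longrightarrow> 1 \<le> i \<Longrightarrow> i \<le> n \<Longrightarrow> 1 \<le> rotk n k i \<and> rotk n k i \<le> n"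
proof -
  assume n: "n > 0" and i: "1 \<le> i" "i \<le> n"
  have "(int i - 1 + k) mod int n < int n" using n by simp
  then have "int (rotk n k i) \<le> int n" using rotk_int[OF n i, of k] by linarith
  then show ?thesis using i by (simp add: rotk_def)
qed

lemma reflk_range: "n > 0 \<Longrightarrow> 1 \<le> i \<Longrightarrow> i \<le> n \<Longrightarrow> 1 \<le> reflk n k i \<and> reflk n k i \<le> n"
proof -
  assume n: "n > 0" and i: "1 \<le> i" "i \<le> n"
  have "(k - int i) mod int n < int n" using n by simp
  then have "int (reflk n k i) \<le> int n" using reflk_int[OF n i, of k] by linarith
  then show ?thesis using i by (simp add: reflk_def)
qed

lemma nat_eqI: "int x - 1 = int y - 1 \<Longrightarrow> x = (y::nat)" by simp

lemma rot_rot: "n > 0 \<Longrightarrow> rotk n a \<circ> rotk n b = rotk n (a + b)"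
proof (rule ext)
  fix i assume n: "n > 0"
  show "(rotk n a \<circ> rotk n b) i = rotk n (a+b) i"
  proof (cases "1 \<le> i \<and> i \<le> n")
    case True
    have r: "1 \<le> rotk n b i" "rotk n b i \<le> n" using rotk_range[OF n] True by auto
    have "int (rotk n a (rotk n b i)) - 1 = (int (rotk n b i) - 1 + a) mod int n"
      using rotk_int[OF n r] .
    also have "\<dots> = ((int i - 1 + b) mod int n + a) mod int n" using rotk_int[OF n] True by simp
    also have "\<dots> = (int i - 1 + (a + b)) mod int n" by (simp add: mod_simps algebra_simps)
    also have "\<dots> = int (rotk n (a+b) i) - 1" using rotk_int[OF n] True by simp
    finally show ?thesis by simp
  qed (auto simp add: rotk_def)
qed

lemma rot_refl: "n > 0 \<Longrightarrow> rotk n a \<circ> reflk n b = reflk n (a + b)"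
proof (rule ext)
  fix i assume n: "n > 0"
  show "(rotk n a \<circ> reflk n b) i = reflk n (a+b) i"
  proof (cases "1 \<le> i \<and> i \<le> n")
    case True
    have r: "1 \<le> reflk n b i" "reflk n b i \<le> n" using reflk_range[OF n] True by auto
    have "int (rotk n a (reflk n b i)) - 1 = (int (reflk n b i) - 1 + a) mod int n"
      using rotk_int[OF n r] .
    also have "\<dots> = ((b - int i) mod int n + a) mod int n" using reflk_int[OF n] True by simp
    also have "\<dots> = ((a + b) - int i) mod int n" by (simp add: mod_simps algebra_simps)
    also have "\<dots> = int (reflk n (a+b) i) - 1" using reflk_int[OF n] True by simp
    finally show ?thesis by simp
  qed (auto simp add: rotk_def reflk_def)
qed

lemma refl_rot: "n > 0 \<Longrightarrow> reflk n a \<circ> rotk n b = reflk n (a - b)"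
proof (rule ext)
  fix i assume n: "n > 0"
  show "(reflk n a \<circ> rotk n b) i = reflk n (a-b) i"
  proof (cases "1 \<le> i \<and> i \<le> n")
    case True
    have r: "1 \<le> rotk n b i" "rotk n b i \<le> n" using rotk_range[OF n] True by auto
    have "int (reflk n a (rotk n b i)) - 1 = (a - int (rotk n b i)) mod int n"
      using reflk_int[OF n r] .
    also have "\<dots> = ((a - 1) - (int (rotk n b i) - 1)) mod int n" by (simp add: algebra_simps)
    also have "\<dots> = ((a - 1) - (int i - 1 + b) mod int n) mod int n" using rotk_int[OF n] True by simp
    also have "\<dots> = ((a - b) - int i) mod int n" by (simp only: mod_diff_right_eq) (simp add: algebra_simps)
    also have "\<dots> = int (reflk n (a-b) i) - 1" using reflk_int[OF n] True by simp
    finally show ?thesis by simp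
  qed (auto simp add: rotk_def reflk_def)
qed

lemma refl_refl: "n > 0 \<Longrightarrow> reflk n a \<circ> reflk n b = rotk n (a - b)"
proof (rule ext)
  fix i assume n: "n > 0"
  show "(reflk n a \<circ> reflk n b) i = rotk n (a-b) i"
  proof (cases "1 \<le> i \<and> i \<le> n")
    case True
    have r: "1 \<le> reflk n b i" "reflk n b i \<le> n" using reflk_range[OF n] True by auto
    have "int (reflk n a (reflk n b i)) - 1 = (a - int (reflk n b i)) mod int n"
      using reflk_int[OF n r] .
    also have "\<dots> = ((a - 1) - (int (reflk n b i) - 1)) mod int n" by (simp add: algebra_simps)
    also have "\<dots> = ((a - 1) - (b - int i) mod int n) mod int n" using reflk_int[OF n] True by simp
    also have "\<dots> = (int i - 1 + (a - b)) mod int n" by (simp only: mod_diff_right_eq) (simp add: algebra_simps)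
    also have "\<dots> = int (rotk n (a-b) i) - 1" using rotk_int[OF n] True by simp
    finally show ?thesis by simp
  qed (auto simp add: rotk_def reflk_def)
qed

lemma rotk_mod: "rotk n (k mod int n) = rotk n k"
  by (rule ext) (simp add: rotk_def mod_simps)
lemma reflk_mod: "reflk n (k mod int n) = reflk n k"
  by (rule ext) (simp add: reflk_def mod_simps)
lemma rotk_cong: "x mod int n = y mod int n \<Longrightarrow> rotk n x = rotk n y"
  by (metis rotk_mod)
lemma reflk_cong: "x mod int n = y mod int n \<Longrightarrow> reflk n x = reflk n y"
  by (metis reflk_mod)

lemma rotk0: "n > 0 \<Longrightarrow> rotk n 0 = id"
proof (rule ext)
  fix i assume "n > 0"
  show "rotk n 0 i = id i"
  proof (cases "1 \<le> i \<and> i \<le> n")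
    case True
    then have "(int i - 1) mod int n = int i - 1" by (intro mod_pos_pos_trivial) auto
    then have "int (rotk n 0 i) = int i" using True by (simp add: rotk_def)
    then show ?thesis by simp
  qed (auto simp add: rotk_def)
qed

lemma rotk1: "n > 0 \<Longrightarrow> rotk n 1 = rot n"
  by (rule ext) (simp add: rotk_def rot_def flip_def nat_mod_distrib)

lemma reflk0: "n > 0 \<Longrightarrow> reflk n 0 = flip n"
proof (rule ext)
  fix i assume "n > 0"
  show "reflk n 0 i = flip n i"
  proof (cases "1 \<le> i \<and> i \<le> n")
    case True
    then have "(- int i) mod int n = (int n - int i) mod int n" by (simp add: mod_simps)
    also have "\<dots> = int n - int i" using True by (intro mod_pos_pos_trivial) auto
    finally have "(- int i) mod int n = int n - int i" .
    then have "int (reflk n 0 i) = int (flip n i)" using True by (simp add: reflk_def flip_def)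
    then show ?thesis by simp
  qed (auto simp add: reflk_def flip_def)
qed



lemma rotk_nat_in: "n > 0 \<Longrightarrow> rotk n (int t) \<in> dihedral n"
proof (induction t)
  case 0 then show ?case using rotk0[of n] by (metis dihedral.id_in of_nat_0)
next
  case (Suc t)
  have "rotk n (int (Suc t)) = rotk n 1 \<circ> rotk n (int t)" using rot_rot[OF Suc.prems, of 1 "int t"] by simp
  then show ?case using Suc rotk1[OF Suc.prems] by (metis dihedral.comp_in dihedral.rot_in)
qed

lemma rotk_in: "n > 0 \<Longrightarrow> rotk n k \<in> dihedral n"
proof -
  assume n: "n > 0"
  have "int (nat (k mod int n)) = k mod int n" using n by simp
  then have "rotk n k = rotk n (int (nat (k mod int n)))" by (simp only: rotk_mod)
  then show ?thesis using rotk_nat_in[OF n] by metis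
qed

lemma reflk_in: "n > 0 \<Longrightarrow> reflk n k \<in> dihedral n"
proof -
  assume n: "n > 0"
  have "reflk n k = rotk n k \<circ> reflk n 0" using rot_refl[OF n, of k 0] by simp
  then show ?thesis using n reflk0[OF n] rotk_in[OF n] by (simp add: dihedral.comp_in dihedral.flip_in)
qed

lemma dihedral_sub: "g \<in> dihedral n \<Longrightarrow> n > 0 \<Longrightarrow> \<exists>k. g = rotk n k \<or> g = reflk n k"
proof (induction rule: dihedral.induct)
  case id_in then show ?case using rotk0 by metis
next
  case rot_in then show ?case using rotk1 by metis
next
  case flip_in then show ?case using reflk0 by metis
next
  case (comp_in g h)
  then show ?case using rot_rot rot_refl refl_rot refl_refl by metis
next
  case (inv_in g)
  then obtain k where "g = rotk n k \<or> g = reflk n k" by blast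
  then show ?case
  proof
    assume g: "g = rotk n k"
    have "inv g = rotk n (-k)"
      unfolding g by (rule inv_unique_comp) (simp_all add: rot_rot inv_in.prems rotk0)
    then show ?thesis by blast
  next
    assume g: "g = reflk n k"
    have "inv g = reflk n k"
      unfolding g by (rule inv_unique_comp) (simp_all add: refl_refl inv_in.prems rotk0)
    then show ?thesis by blast
  qed
qed

definition RR :: "nat \<Rightarrow> int set" where "RR n = {0..<int n}"

lemma dihedral_eq: "n > 0 \<Longrightarrow> dihedral n = rotk n ` RR n \<union> reflk n ` RR n"
proof
  assume n: "n > 0"
  show "dihedral n \<subseteq> rotk n ` RR n \<union> reflk n ` RR n"
  proof
    fix g assume "g \<in> dihedral n"
    then obtain k where "g = rotk n k \<or> g = reflk n k" using dihedral_sub n by blast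
    moreover have "k mod int n \<in> RR n" using n by (simp add: RR_def)
    ultimately show "g \<in> rotk n ` RR n \<union> reflk n ` RR n"
      by (metis UnI1 UnI2 image_eqI rotk_mod reflk_mod)
  qed
  show "rotk n ` RR n \<union> reflk n ` RR n \<subseteq> dihedral n"
    using rotk_in[OF n] reflk_in[OF n] by auto
qed

lemma rotk_eval1: "n > 0 \<Longrightarrow> int (rotk n k 1) - 1 = k mod int n"
  using rotk_int[of n 1 k] by simp

lemma inj_rotk: "n > 0 \<Longrightarrow> inj_on (rotk n) (RR n)"
proof (rule inj_onI)
  fix a b assume n: "n > 0" and ab: "a \<in> RR n" "b \<in> RR n" "rotk n a = rotk n b"
  have "a mod int n = b mod int n" using rotk_eval1[OF n, of a] rotk_eval1[OF n, of b] ab(3) by simp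
  then show "a = b" using ab(1,2) by (simp add: RR_def)
qed

lemma inj_reflk: "n > 0 \<Longrightarrow> inj_on (reflk n) (RR n)"
proof (rule inj_onI)
  fix a b assume n: "n > 0" and ab: "a \<in> RR n" "b \<in> RR n" "reflk n a = reflk n b"
  have "(a - int n) mod int n = (b - int n) mod int n"
    using reflk_int[OF n, of n a] reflk_int[OF n, of n b] ab(3) n by simp
  then have "a mod int n = b mod int n" by (simp add: mod_simps)
  then show "a = b" using ab(1,2) by (simp add: RR_def)
qed

lemma rotk_ne_reflk: "n > 2 \<Longrightarrow> rotk n a \<noteq> reflk n b"
proof
  assume n: "n > 2" and e: "rotk n a = reflk n b"
  have n0: "n > 0" using n by simp
  have "int (rotk n a 1) - 1 = int (reflk n b 1) - 1" using e by simp
  then have e1: "(a) mod int n = (b - 1) mod int n"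
    using rotk_int[OF n0, of 1 a] reflk_int[OF n0, of 1 b] n by simp
  have "int (rotk n a 2) - 1 = int (reflk n b 2) - 1" using e by simp
  then have e2: "(1 + a) mod int n = (b - 2) mod int n"
    using rotk_int[OF n0, of 2 a] reflk_int[OF n0, of 2 b] n by simp
  have d1: "int n dvd a - (b - 1)" using e1 by (simp add: mod_eq_dvd_iff)
  have d2: "int n dvd (1 + a) - (b - 2)" using e2 by (simp add: mod_eq_dvd_iff)
  have "int n dvd ((1 + a) - (b - 2)) - (a - (b - 1))" using d1 d2 by (rule dvd_diff[rotated])
  then have "int n dvd 2" by simp
  then have "int n \<le> 2" using zdvd_imp_le[of "int n" 2] by simp
  then show False using n by simp
qed

lemma finite_dihedral: "n > 0 \<Longrightarrow> finite (dihedral n)"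
  using dihedral_eq[of n] by (simp add: RR_def)

lemma card_RR: "card (RR n) = n" by (simp add: RR_def)



lemma mod_self_RR: "k \<in> RR n \<Longrightarrow> k mod int n = k"
  by (simp add: RR_def)

lemma rotk_entry:
  assumes n: "n > 0" and i: "1 \<le> i" "i \<le> n" and j: "1 \<le> j" "j \<le> n" and k: "k \<in> RR n"
  shows "rotk n k i = j \<longleftrightarrow> k = (int j - int i) mod int n"
proof -
  have jm: "(int j - 1) mod int n = int j - 1" using j by (intro mod_pos_pos_trivial) auto
  have "rotk n k i = j \<longleftrightarrow> int (rotk n k i) - 1 = int j - 1" by auto
  also have "\<dots> \<longleftrightarrow> (int i - 1 + k) mod int n = (int j - 1) mod int n"
    using rotk_int[OF n i] jm by simp
  also have "\<dots> \<longleftrightarrow> int n dvd (int i - 1 + k) - (int j - 1)" by (simp add: mod_eq_dvd_iff)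
  also have "\<dots> \<longleftrightarrow> int n dvd k - (int j - int i)" by (simp add: algebra_simps)
  also have "\<dots> \<longleftrightarrow> k mod int n = (int j - int i) mod int n" by (simp add: mod_eq_dvd_iff)
  also have "\<dots> \<longleftrightarrow> k = (int j - int i) mod int n" using mod_self_RR[OF k] by simp
  finally show ?thesis .
qed

lemma reflk_entry:
  assumes n: "n > 0" and i: "1 \<le> i" "i \<le> n" and j: "1 \<le> j" "j \<le> n" and k: "k \<in> RR n"
  shows "reflk n k i = j \<longleftrightarrow> k = (int i + int j - 1) mod int n"
proof -
  have jm: "(int j - 1) mod int n = int j - 1" using j by (intro mod_pos_pos_trivial) auto
  have "reflk n k i = j \<longleftrightarrow> int (reflk n k i) - 1 = int j - 1" by auto
  also have "\<dots> \<longleftrightarrow> (k - int i) mod int n = (int j - 1) mod int n"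
    using reflk_int[OF n i] jm by simp
  also have "\<dots> \<longleftrightarrow> int n dvd (k - int i) - (int j - 1)" by (simp add: mod_eq_dvd_iff)
  also have "\<dots> \<longleftrightarrow> int n dvd k - (int i + int j - 1)" by (simp add: algebra_simps)
  also have "\<dots> \<longleftrightarrow> k mod int n = (int i + int j - 1) mod int n" by (simp add: mod_eq_dvd_iff)
  also have "\<dots> \<longleftrightarrow> k = (int i + int j - 1) mod int n" using mod_self_RR[OF k] by simp
  finally show ?thesis .
qed

lemma sum_entry:
  assumes n: "n > 2" and i: "1 \<le> i" "i \<le> n" and j: "1 \<le> j" "j \<le> n"
  shows "(\<Sum>g\<in>dihedral n. lam g * perm_entry g i j) =
         lam (rotk n (int j - int i)) + lam (reflk n (int i + int j - 1))"
proof -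
  have n0: "n > 0" using n by simp
  have disj: "rotk n ` RR n \<inter> reflk n ` RR n = {}" using rotk_ne_reflk[OF n] by auto
  have fin: "finite (RR n)" by (simp add: RR_def)
  have m1: "(int j - int i) mod int n \<in> RR n" using n0 by (simp add: RR_def)
  have m2: "(int i + int j - 1) mod int n \<in> RR n" using n0 by (simp add: RR_def)
  have "(\<Sum>g\<in>dihedral n. lam g * perm_entry g i j) =
     (\<Sum>g\<in>rotk n ` RR n. lam g * perm_entry g i j) + (\<Sum>g\<in>reflk n ` RR n. lam g * perm_entry g i j)"
    unfolding dihedral_eq[OF n0] using disj fin by (simp add: sum.union_disjoint)
  also have "(\<Sum>g\<in>rotk n ` RR n. lam g * perm_entry g i j) = (\<Sum>k\<in>RR n. lam (rotk n k) * perm_entry (rotk n k) i j)"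
    using inj_rotk[OF n0] by (simp add: sum.reindex)
  also have "\<dots> = (\<Sum>k\<in>RR n. if k = (int j - int i) mod int n then lam (rotk n k) else 0)"
    by (rule sum.cong) (auto simp: perm_entry_def rotk_entry[OF n0 i j])
  also have "\<dots> = lam (rotk n (int j - int i))" using fin m1 by (simp add: rotk_mod)
  also have "(\<Sum>g\<in>reflk n ` RR n. lam g * perm_entry g i j) = (\<Sum>k\<in>RR n. lam (reflk n k) * perm_entry (reflk n k) i j)"
    using inj_reflk[OF n0] by (simp add: sum.reindex)
  also have "\<dots> = (\<Sum>k\<in>RR n. if k = (int i + int j - 1) mod int n then lam (reflk n k) else 0)"
    by (rule sum.cong) (auto simp: perm_entry_def reflk_entry[OF n0 i j])
  also have "\<dots> = lam (reflk n (int i + int j - 1))" using fin m2 by (simp add: reflk_mod)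
  finally show ?thesis .
qed

lemma dep_iff:
  assumes n: "n > 2"
  shows "lam \<in> dependences n \<longleftrightarrow> (\<forall>g. g \<notin> dihedral n \<longrightarrow> lam g = 0) \<and>
     (\<forall>p q::int. lam (rotk n (q - p)) + lam (reflk n (p + q + 1)) = 0)"
proof -
  have n0: "n > 0" using n by simp
  have A: "(\<forall>i\<in>{1..n}. \<forall>j\<in>{1..n}. (\<Sum>g\<in>dihedral n. lam g * perm_entry g i j) = 0) \<longleftrightarrow>
     (\<forall>p q::int. lam (rotk n (q - p)) + lam (reflk n (p + q + 1)) = 0)"
  proof
    assume H: "\<forall>i\<in>{1..n}. \<forall>j\<in>{1..n}. (\<Sum>g\<in>dihedral n. lam g * perm_entry g i j) = 0"
    show "\<forall>p q::int. lam (rotk n (q - p)) + lam (reflk n (p + q + 1)) = 0"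
    proof (intro allI)
      fix p q :: int
      define i where "i = nat (p mod int n) + 1"
      define j where "j = nat (q mod int n) + 1"
      have ii: "int i = p mod int n + 1" using n0 by (simp add: i_def)
      have jj: "int j = q mod int n + 1" using n0 by (simp add: j_def)
      have "p mod int n < int n" using n0 by simp
      then have "int i \<le> int n" using ii by linarith
      then have ir: "1 \<le> i" "i \<le> n" by (simp add: i_def, simp)
      have "q mod int n < int n" using n0 by simp
      then have "int j \<le> int n" using jj by linarith
      then have jr: "1 \<le> j" "j \<le> n" by (simp add: j_def, simp)
      have "(int j - int i) mod int n = (q - p) mod int n" unfolding ii jj by (simp add: mod_simps)
      then have r1: "rotk n (int j - int i) = rotk n (q - p)" by (rule rotk_cong)
      have "(int i + int j - 1) mod int n = (p + q + 1) mod int n" unfolding ii jj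
        by (simp, metis add.commute mod_add_eq mod_add_right_eq)
      then have r2: "reflk n (int i + int j - 1) = reflk n (p + q + 1)" by (rule reflk_cong)
      have "(\<Sum>g\<in>dihedral n. lam g * perm_entry g i j) = 0" using H ir jr by auto
      then show "lam (rotk n (q - p)) + lam (reflk n (p + q + 1)) = 0"
        using sum_entry[OF n ir jr, of lam] r1 r2 by simp
    qed
  next
    assume H: "\<forall>p q::int. lam (rotk n (q - p)) + lam (reflk n (p + q + 1)) = 0"
    show "\<forall>i\<in>{1..n}. \<forall>j\<in>{1..n}. (\<Sum>g\<in>dihedral n. lam g * perm_entry g i j) = 0"
    proof (intro ballI)
      fix i j assume "i \<in> {1..n}" "j \<in> {1..n}"
      then have ir: "1 \<le> i" "i \<le> n" and jr: "1 \<le> j" "j \<le> n" by auto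
      have "lam (rotk n ((int j - 1) - (int i - 1))) + lam (reflk n ((int i - 1) + (int j - 1) + 1)) = 0"
        using H by blast
      then show "(\<Sum>g\<in>dihedral n. lam g * perm_entry g i j) = 0"
        using sum_entry[OF n ir jr, of lam] by (simp add: algebra_simps)
    qed
  qed
  show ?thesis unfolding dependences_def using A by blast
qed



definition cf :: "nat \<Rightarrow> (int \<Rightarrow> bool) \<Rightarrow> (int \<Rightarrow> bool) \<Rightarrow> (nat \<Rightarrow> nat) \<Rightarrow> real" where
  "cf n P Q g = (if \<exists>k\<in>RR n. P k \<and> g = rotk n k then 1
                 else if \<exists>k\<in>RR n. Q k \<and> g = reflk n k then -1 else 0)"

lemma cf_rot: "n > 2 \<Longrightarrow> k \<in> RR n \<Longrightarrow> cf n P Q (rotk n k) = (if P k then 1 else 0)"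
proof -
  assume n: "n > 2" and k: "k \<in> RR n"
  have n0: "n > 0" using n by simp
  have "(\<exists>k'\<in>RR n. P k' \<and> rotk n k = rotk n k') \<longleftrightarrow> P k"
    using inj_rotk[OF n0] k by (auto dest: inj_onD)
  moreover have "\<not> (\<exists>k'\<in>RR n. Q k' \<and> rotk n k = reflk n k')" using rotk_ne_reflk[OF n] by blast
  ultimately show ?thesis unfolding cf_def by auto
qed

lemma cf_refl: "n > 2 \<Longrightarrow> k \<in> RR n \<Longrightarrow> cf n P Q (reflk n k) = (if Q k then -1 else 0)"
proof -
  assume n: "n > 2" and k: "k \<in> RR n"
  have n0: "n > 0" using n by simp
  have "(\<exists>k'\<in>RR n. Q k' \<and> reflk n k = reflk n k') \<longleftrightarrow> Q k"
    using inj_reflk[OF n0] k by (auto dest: inj_onD)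
  moreover have "\<not> (\<exists>k'\<in>RR n. P k' \<and> reflk n k = rotk n k')" using rotk_ne_reflk[OF n] by metis
  ultimately show ?thesis unfolding cf_def by simp
qed

lemma cf_out: "n > 0 \<Longrightarrow> g \<notin> dihedral n \<Longrightarrow> cf n P Q g = 0"
  unfolding cf_def using dihedral_eq[of n] by auto

lemma RR_mod: "n > 0 \<Longrightarrow> x mod int n \<in> RR n" by (simp add: RR_def)

lemma cf_rot': "n > 2 \<Longrightarrow> cf n P Q (rotk n x) = (if P (x mod int n) then 1 else 0)"
  by (metis cf_rot RR_mod rotk_mod zero_less_numeral order.strict_trans)
lemma cf_refl': "n > 2 \<Longrightarrow> cf n P Q (reflk n x) = (if Q (x mod int n) then -1 else 0)"
  by (metis cf_refl RR_mod reflk_mod zero_less_numeral order.strict_trans)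

lemma even_mod_int: "even n \<Longrightarrow> even (x mod int n) \<longleftrightarrow> even x"
  by (simp add: dvd_mod_iff)

lemma set_split: "n > 0 \<Longrightarrow> {g\<in>dihedral n. F g} =
   rotk n ` {k\<in>RR n. F (rotk n k)} \<union> reflk n ` {k\<in>RR n. F (reflk n k)}"
  using dihedral_eq[of n] by auto

lemma card_rot_sub: "n > 0 \<Longrightarrow> S \<subseteq> RR n \<Longrightarrow> card (rotk n ` S) = card S"
  by (meson card_image inj_on_subset inj_rotk)
lemma card_refl_sub: "n > 0 \<Longrightarrow> S \<subseteq> RR n \<Longrightarrow> card (reflk n ` S) = card S"
  by (meson card_image inj_on_subset inj_reflk)

lemma card_even: "n = 2 * m \<Longrightarrow> card {k\<in>RR n. even k} = m"
proof -
  assume n: "n = 2 * m"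
  have "{k\<in>RR n. even k} = (\<lambda>t. 2 * t) ` {0..<int m}"
  proof
    show "{k\<in>RR n. even k} \<subseteq> (\<lambda>t. 2 * t) ` {0..<int m}"
    proof
      fix k assume "k \<in> {k\<in>RR n. even k}"
      then have "0 \<le> k" "k < 2 * int m" "even k" using n by (auto simp: RR_def)
      then show "k \<in> (\<lambda>t. 2 * t) ` {0..<int m}"
        by (intro image_eqI[of _ _ "k div 2"]) auto
    qed
  qed (auto simp: RR_def n)
  moreover have "inj_on (\<lambda>t::int. 2 * t) {0..<int m}" by (auto simp: inj_on_def)
  ultimately show ?thesis by (simp add: card_image)
qed

lemma card_odd: "n = 2 * m \<Longrightarrow> card {k\<in>RR n. odd k} = m"
proof -
  assume n: "n = 2 * m"
  have "{k\<in>RR n. odd k} = (\<lambda>t. 2 * t + 1) ` {0..<int m}"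
  proof
    show "{k\<in>RR n. odd k} \<subseteq> (\<lambda>t. 2 * t + 1) ` {0..<int m}"
    proof
      fix k assume "k \<in> {k\<in>RR n. odd k}"
      then have "0 \<le> k" "k < 2 * int m" "odd k" using n by (auto simp: RR_def)
      then show "k \<in> (\<lambda>t. 2 * t + 1) ` {0..<int m}"
        by (intro image_eqI[of _ _ "k div 2"]) auto
    qed
  qed (auto simp: RR_def n)
  moreover have "inj_on (\<lambda>t::int. 2 * t + 1) {0..<int m}" by (auto simp: inj_on_def)
  ultimately show ?thesis by (simp add: card_image)
qed



lemma odd_case:
  assumes n: "n > 2" and od: "odd n"
  shows "\<exists>c :: (nat \<Rightarrow> nat) \<Rightarrow> real.
              c \<noteq> (\<lambda>g. 0) \<and> dependences n = {(\<lambda>g. a * c g) | a. True} \<and>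
              (\<forall>g\<in>dihedral n. c g = 1 \<or> c g = -1) \<and>
              card {g\<in>dihedral n. c g = 1} = n \<and>
              card {g\<in>dihedral n. c g = -1} = n"
proof -
  have n0: "n > 0" using n by simp
  obtain m where m: "n = 2 * m + 1" using od oddE by blast
  define c where "c = cf n (\<lambda>_. True) (\<lambda>_. True)"
  have cr: "c (rotk n x) = 1" for x unfolding c_def by (simp add: cf_rot'[OF n])
  have cl: "c (reflk n x) = -1" for x unfolding c_def by (simp add: cf_refl'[OF n])
  have co: "g \<notin> dihedral n \<Longrightarrow> c g = 0" for g unfolding c_def by (simp add: cf_out[OF n0])
  have c_ne: "c \<noteq> (\<lambda>g. 0)" using cr[of 0] by auto
  have dep: "dependences n = {(\<lambda>g. a * c g) | a. True}"
  proof (rule set_eqI)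
    fix lam :: "(nat \<Rightarrow> nat) \<Rightarrow> real"
    show "lam \<in> dependences n \<longleftrightarrow> lam \<in> {(\<lambda>g. a * c g) | a. True}"
    proof
      assume "lam \<in> dependences n"
      then have Z: "\<And>g. g \<notin> dihedral n \<Longrightarrow> lam g = 0"
        and E: "\<And>p q. lam (rotk n (q - p)) + lam (reflk n (p + q + 1)) = 0"
        using dep_iff[OF n] by blast+
      define a where "a = lam (rotk n 0)"
      have E0: "a + lam (reflk n 1) = 0" using E[where p=0 and q=0] by (simp add: a_def)
      have R: "lam (rotk n k) = a" for k
      proof -
        have "lam (rotk n k) + lam (reflk n (- (k * (int m + 1)) + - (k * (int m + 1)) + k + 1)) = 0"
          using E[where p="- (k * (int m + 1))" and q="- (k * (int m + 1)) + k"] by (simp add: algebra_simps)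
        moreover have "reflk n (- (k * (int m + 1)) + - (k * (int m + 1)) + k + 1) = reflk n 1"
          by (rule reflk_cong) (simp add: mod_eq_dvd_iff m algebra_simps, rule dvdI[where k="-k"], simp add: algebra_simps)
        ultimately show ?thesis using E0 by simp
      qed
      have L: "lam (reflk n k) = - a" for k
      proof -
        have "lam (rotk n 0) + lam (reflk n ((k - 1) * (int m + 1) + (k - 1) * (int m + 1) + 1)) = 0"
          using E[where p="(k - 1) * (int m + 1)" and q="(k - 1) * (int m + 1)"] by simp
        moreover have "reflk n ((k - 1) * (int m + 1) + (k - 1) * (int m + 1) + 1) = reflk n k"
          by (rule reflk_cong) (simp add: mod_eq_dvd_iff m algebra_simps, rule dvdI[where k="k"], simp add: algebra_simps)
        ultimately show ?thesis by (simp add: a_def)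
      qed
      have "lam = (\<lambda>g. a * c g)"
      proof
        fix g show "lam g = a * c g"
        proof (cases "g \<in> dihedral n")
          case True
          then obtain k where "g = rotk n k \<or> g = reflk n k" using dihedral_sub n0 by blast
          then show ?thesis using R L cr cl by auto
        qed (simp add: Z co)
      qed
      then show "lam \<in> {(\<lambda>g. a * c g) | a. True}" by blast
    next
      assume "lam \<in> {(\<lambda>g. a * c g) | a. True}"
      then obtain a where a: "lam = (\<lambda>g. a * c g)" by blast
      show "lam \<in> dependences n" unfolding dep_iff[OF n] a using co cr cl by simp
    qed
  qed
  have vals: "\<forall>g\<in>dihedral n. c g = 1 \<or> c g = -1"
  proof
    fix g assume "g \<in> dihedral n"
    then obtain k where "g = rotk n k \<or> g = reflk n k" using dihedral_sub n0 by blast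
    then show "c g = 1 \<or> c g = -1" using cr cl by auto
  qed
  have s1: "{g\<in>dihedral n. c g = 1} = rotk n ` RR n"
    unfolding set_split[OF n0] using cr cl by simp
  have s2: "{g\<in>dihedral n. c g = -1} = reflk n ` RR n"
    unfolding set_split[OF n0] using cr cl by simp
  have "card {g\<in>dihedral n. c g = 1} = n" unfolding s1 using card_rot_sub[OF n0] card_RR by simp
  moreover have "card {g\<in>dihedral n. c g = -1} = n" unfolding s2 using card_refl_sub[OF n0] card_RR by simp
  ultimately show ?thesis using c_ne dep vals by blast
qed



lemma even_case:
  assumes n: "n > 2" and ev: "even n"
  shows "\<exists>c1 c2 :: (nat \<Rightarrow> nat) \<Rightarrow> real.
              (\<forall>a b. (\<forall>g. a * c1 g + b * c2 g = 0) \<longrightarrow> a = 0 \<and> b = 0) \<and>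
              dependences n = {(\<lambda>g. a * c1 g + b * c2 g) | a b. True} \<and>
              (\<forall>g\<in>dihedral n. (c1 g, c2 g) \<in> {(1,0), (-1,0), (0,1), (0,-1)}) \<and>
              card {g\<in>dihedral n. (c1 g, c2 g) = (1,0)} = n div 2 \<and>
              card {g\<in>dihedral n. (c1 g, c2 g) = (-1,0)} = n div 2 \<and>
              card {g\<in>dihedral n. (c1 g, c2 g) = (0,1)} = n div 2 \<and>
              card {g\<in>dihedral n. (c1 g, c2 g) = (0,-1)} = n div 2"
proof -
  have n0: "n > 0" using n by simp
  obtain m where m: "n = 2 * m" using ev by blast
  have md: "n div 2 = m" using m by simp
  define c1 where "c1 = cf n even odd"
  define c2 where "c2 = cf n odd even"
  have pm: "even (x mod int n) \<longleftrightarrow> even x" for x using even_mod_int[OF ev] .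
  have c1r: "c1 (rotk n x) = (if even x then 1 else 0)" for x unfolding c1_def by (simp add: cf_rot'[OF n] pm)
  have c1l: "c1 (reflk n x) = (if odd x then -1 else 0)" for x unfolding c1_def by (simp add: cf_refl'[OF n] pm)
  have c2r: "c2 (rotk n x) = (if odd x then 1 else 0)" for x unfolding c2_def by (simp add: cf_rot'[OF n] pm)
  have c2l: "c2 (reflk n x) = (if even x then -1 else 0)" for x unfolding c2_def by (simp add: cf_refl'[OF n] pm)
  have c1o: "g \<notin> dihedral n \<Longrightarrow> c1 g = 0" for g unfolding c1_def by (simp add: cf_out[OF n0])
  have c2o: "g \<notin> dihedral n \<Longrightarrow> c2 g = 0" for g unfolding c2_def by (simp add: cf_out[OF n0])
  have indep: "\<forall>a b. (\<forall>g. a * c1 g + b * c2 g = 0) \<longrightarrow> a = 0 \<and> b = 0"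
  proof (intro allI impI)
    fix a b :: real assume H: "\<forall>g. a * c1 g + b * c2 g = 0"
    have "a = 0" using H[rule_format, of "rotk n 0"] c1r c2r by simp
    moreover have "b = 0" using H[rule_format, of "rotk n 1"] c1r c2r by simp
    ultimately show "a = 0 \<and> b = 0" ..
  qed
  have dep: "dependences n = {(\<lambda>g. a * c1 g + b * c2 g) | a b. True}"
  proof (rule set_eqI)
    fix lam :: "(nat \<Rightarrow> nat) \<Rightarrow> real"
    show "lam \<in> dependences n \<longleftrightarrow> lam \<in> {(\<lambda>g. a * c1 g + b * c2 g) | a b. True}"
    proof
      assume "lam \<in> dependences n"
      then have Z: "\<And>g. g \<notin> dihedral n \<Longrightarrow> lam g = 0"
        and E: "\<And>p q. lam (rotk n (q - p)) + lam (reflk n (p + q + 1)) = 0"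
        using dep_iff[OF n] by blast+
      define a where "a = lam (rotk n 0)"
      define b where "b = lam (rotk n 1)"
      have E0: "a + lam (reflk n 1) = 0" using E[where p=0 and q=0] by (simp add: a_def)
      have E1: "b + lam (reflk n 2) = 0" using E[where p=0 and q=1] by (simp add: b_def)
      have R: "lam (rotk n k) = (if even k then a else b)" for k
      proof (cases "even k")
        case True
        then obtain t where t: "k = 2 * t" by blast
        have "lam (rotk n k) + lam (reflk n 1) = 0" using E[where p="-t" and q=t] t by simp
        then show ?thesis using E0 True by simp
      next
        case False
        then obtain t where t: "k = 2 * t + 1" using oddE by blast
        have "lam (rotk n k) + lam (reflk n 2) = 0" using E[where p="-t" and q="t+1"] t by simp
        then show ?thesis using E1 False by simp
      qed
      have L: "lam (reflk n k) = (if odd k then -a else -b)" for k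
      proof (cases "odd k")
        case True
        then obtain t where t: "k = 2 * t + 1" using oddE by blast
        have "lam (rotk n 0) + lam (reflk n k) = 0" using E[where p=t and q=t] t by simp
        then show ?thesis using True by (simp add: a_def)
      next
        case False
        then obtain t where t: "k = 2 * t" by blast
        have "lam (rotk n 1) + lam (reflk n k) = 0" using E[where p="t - 1" and q=t] t by simp
        then show ?thesis using False by (simp add: b_def)
      qed
      have "lam = (\<lambda>g. a * c1 g + b * c2 g)"
      proof
        fix g show "lam g = a * c1 g + b * c2 g"
        proof (cases "g \<in> dihedral n")
          case True
          then obtain k where "g = rotk n k \<or> g = reflk n k" using dihedral_sub n0 by blast
          then show ?thesis using R L c1r c1l c2r c2l by auto
        qed (simp add: Z c1o c2o)
      qed
      then show "lam \<in> {(\<lambda>g. a * c1 g + b * c2 g) | a b. True}" by blast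
    next
      assume "lam \<in> {(\<lambda>g. a * c1 g + b * c2 g) | a b. True}"
      then obtain a b where ab: "lam = (\<lambda>g. a * c1 g + b * c2 g)" by blast
      have par: "even (q - p) \<longleftrightarrow> odd (p + q + 1)" for p q :: int by presburger
      show "lam \<in> dependences n" unfolding dep_iff[OF n] ab
        using c1o c2o c1r c2r c1l c2l par by simp
    qed
  qed
  have vals: "\<forall>g\<in>dihedral n. (c1 g, c2 g) \<in> {(1,0), (-1,0), (0,1), (0,-1)}"
  proof
    fix g assume "g \<in> dihedral n"
    then obtain k where "g = rotk n k \<or> g = reflk n k" using dihedral_sub n0 by blast
    then show "(c1 g, c2 g) \<in> {(1,0), (-1,0), (0,1), (0,-1)}" using c1r c1l c2r c2l by (auto split: if_splits)
  qed
  have A1: "{k\<in>RR n. (c1 (rotk n k), c2 (rotk n k)) = (1,0)} = {k\<in>RR n. even k}"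
    by (auto simp: c1r c1l c2r c2l split: if_splits)
  have B1: "{k\<in>RR n. (c1 (reflk n k), c2 (reflk n k)) = (1,0)} = {}"
    by (auto simp: c1r c1l c2r c2l split: if_splits)
  have s1: "{g\<in>dihedral n. (c1 g, c2 g) = (1,0)} = rotk n ` {k\<in>RR n. even k}"
    unfolding set_split[OF n0] A1 B1 by simp
  have A2: "{k\<in>RR n. (c1 (reflk n k), c2 (reflk n k)) = (-1,0)} = {k\<in>RR n. odd k}"
    by (auto simp: c1r c1l c2r c2l split: if_splits)
  have B2: "{k\<in>RR n. (c1 (rotk n k), c2 (rotk n k)) = (-1,0)} = {}"
    by (auto simp: c1r c1l c2r c2l split: if_splits)
  have s2: "{g\<in>dihedral n. (c1 g, c2 g) = (-1,0)} = reflk n ` {k\<in>RR n. odd k}"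
    unfolding set_split[OF n0] A2 B2 by simp
  have A3: "{k\<in>RR n. (c1 (rotk n k), c2 (rotk n k)) = (0,1)} = {k\<in>RR n. odd k}"
    by (auto simp: c1r c1l c2r c2l split: if_splits)
  have B3: "{k\<in>RR n. (c1 (reflk n k), c2 (reflk n k)) = (0,1)} = {}"
    by (auto simp: c1r c1l c2r c2l split: if_splits)
  have s3: "{g\<in>dihedral n. (c1 g, c2 g) = (0,1)} = rotk n ` {k\<in>RR n. odd k}"
    unfolding set_split[OF n0] A3 B3 by simp
  have A4: "{k\<in>RR n. (c1 (reflk n k), c2 (reflk n k)) = (0,-1)} = {k\<in>RR n. even k}"
    by (auto simp: c1r c1l c2r c2l split: if_splits)
  have B4: "{k\<in>RR n. (c1 (rotk n k), c2 (rotk n k)) = (0,-1)} = {}"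
    by (auto simp: c1r c1l c2r c2l split: if_splits)
  have s4: "{g\<in>dihedral n. (c1 g, c2 g) = (0,-1)} = reflk n ` {k\<in>RR n. even k}"
    unfolding set_split[OF n0] A4 B4 by simp
  have sub: "{k\<in>RR n. P k} \<subseteq> RR n" for P by auto
  have "card {g\<in>dihedral n. (c1 g, c2 g) = (1,0)} = n div 2"
    unfolding s1 md using card_rot_sub[OF n0 sub] card_even[OF m] by simp
  moreover have "card {g\<in>dihedral n. (c1 g, c2 g) = (-1,0)} = n div 2"
    unfolding s2 md using card_refl_sub[OF n0 sub] card_odd[OF m] by simp
  moreover have "card {g\<in>dihedral n. (c1 g, c2 g) = (0,1)} = n div 2"
    unfolding s3 md using card_rot_sub[OF n0 sub] card_odd[OF m] by simp
  moreover have "card {g\<in>dihedral n. (c1 g, c2 g) = (0,-1)} = n div 2"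
    unfolding s4 md using card_refl_sub[OF n0 sub] card_even[OF m] by simp
  ultimately show ?thesis using indep dep vals by blast
qed


theorem lemma8:
  fixes n :: nat
  assumes "n > 2"
  shows "(odd n \<longrightarrow>
           (\<exists>c :: (nat \<Rightarrow> nat) \<Rightarrow> real.
              c \<noteq> (\<lambda>g. 0) \<and> dependences n = {(\<lambda>g. a * c g) | a. True} \<and>
              (\<forall>g\<in>dihedral n. c g = 1 \<or> c g = -1) \<and>
              card {g\<in>dihedral n. c g = 1} = n \<and>
              card {g\<in>dihedral n. c g = -1} = n)) \<and>
         (even n \<longrightarrow>
           (\<exists>c1 c2 :: (nat \<Rightarrow> nat) \<Rightarrow> real.
              (\<forall>a b. (\<forall>g. a * c1 g + b * c2 g = 0) \<longrightarrow> a = 0 \<and> b = 0) \<and>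
              dependences n = {(\<lambda>g. a * c1 g + b * c2 g) | a b. True} \<and>
              (\<forall>g\<in>dihedral n. (c1 g, c2 g) \<in> {(1,0), (-1,0), (0,1), (0,-1)}) \<and>
              card {g\<in>dihedral n. (c1 g, c2 g) = (1,0)} = n div 2 \<and>
              card {g\<in>dihedral n. (c1 g, c2 g) = (-1,0)} = n div 2 \<and>
              card {g\<in>dihedral n. (c1 g, c2 g) = (0,1)} = n div 2 \<and>
              card {g\<in>dihedral n. (c1 g, c2 g) = (0,-1)} = n div 2))"
  using odd_case[OF assms] even_case[OF assms] by blast

end
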